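(* In the noiseless discrete channel setting described in the context, suppose that for every fixed $\epsilon>0$ and every sequence of sample sizes $n=n_N$ with $n\geq(1+\epsilon)n^*$, it holds that $\lim_{N\to\infty}H(\theta\mid Y^n,X^n)/H(\theta)=0$. Then: (1) $\displaystyle\lim_{N\to\infty}\frac{D(P_{n^*}\|Q_{n^*})}{H(\theta)}=0$; and (2) for every fixed $\epsilon>0$ and every sequence $n=n_N$ with $n\leq(1-\epsilon)n^*$, $$\lim_{N\to\infty}\frac{H(Y_{n+1}\mid Y^n,X^{n+1})}{H(Y)}=1.$$
   Context: Setting. For each $N\in\mathbb N$: $\Theta=\Theta_N$ is a finite subset of the unit sphere of $\mathbb R^N$ of cardinality $M=M_N$, with $M_N\to\infty$ and $\langle\theta,\theta'\rangle\ge 0$ for all $\theta,\theta'\in\Theta$; $P_\Theta$ is the uniform distribution on $\Theta$; $\mathcal D=\mathcal D_N$ is a distribution on $\mathbb R^{L}$; $g=g_N:\mathbb R^L\times\mathbb R^N\to\mathcal Y$ with $\mathcal Y$ finite of cardinality independent of $N$. One draws $\theta\sim P_\Theta$, independently $X_1,X_2,\dots$ i.i.d. from $\mathcal D$, and sets $Y_i=g(X_i,\theta)$; $Y^m=(Y_i)_{i\le m}$, $X^m=(X_i)_{i\le m}$. $H$ denotes Shannon entropy and $D$ Kullback–Leibler divergence (natural log). $Y$ denotes $g(X,\theta)$ with $X\sim\mathcal D$, $\theta\sim P_\Theta$ independent; $n^*=\lfloor H(\theta)/H(Y)\rfloor$. For $m\in\mathbb N$, $P_m$ is the law of $(Y^m,X^m)$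 under the model, and $Q_m$ is the "null" law under which $X_1,\dots,X_m$ are i.i.d. from $\mathcal D$ and, independently of them, $Y_1,\dots,Y_m$ are i.i.d. with the law of $Y$. *)

theory Defs
  imports "HOL-Probability.Probability"
begin

definition pmf_entropy :: "'a pmf \<Rightarrow> real" where
  "pmf_entropy p = - (\<Sum>a\<in>set_pmf p. pmf p a * ln (pmf p a))"

definition pmf_cond_entropy :: "('a \<times> 'b) pmf \<Rightarrow> real" where
  "pmf_cond_entropy p =
     - (\<Sum>ab\<in>set_pmf p. pmf p ab * ln (pmf p ab / pmf (map_pmf snd p) (snd ab)))"

text \<open>The model: parameter set Th (theta uniform on Th), covariate law D, link g.\<close>

definition H_theta :: "(nat \<Rightarrow> real) set \<Rightarrow> real" where
  "H_theta Th = pmf_entropy (pmf_of_set Th)"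

text \<open>Law of Y = g(X,theta), X ~ D independent of theta uniform on Th.\<close>
definition law_Y :: "(nat \<Rightarrow> real) set \<Rightarrow> (nat \<Rightarrow> real) measure
    \<Rightarrow> ((nat \<Rightarrow> real) \<Rightarrow> (nat \<Rightarrow> real) \<Rightarrow> 'y) \<Rightarrow> 'y \<Rightarrow> real" where
  "law_Y Th D g y = (\<Sum>\<theta>\<in>Th. measure D {x \<in> space D. g x \<theta> = y}) / real (card Th)"

definition H_Y :: "(nat \<Rightarrow> real) set \<Rightarrow> (nat \<Rightarrow> real) measure
    \<Rightarrow> ((nat \<Rightarrow> real) \<Rightarrow> (nat \<Rightarrow> real) \<Rightarrow> 'y::finite) \<Rightarrow> real" where
  "H_Y Th D g = - (\<Sum>y\<in>UNIV. law_Y Th D g y * ln (law_Y Th D g y))"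

definition nstar :: "(nat \<Rightarrow> real) set \<Rightarrow> (nat \<Rightarrow> real) measure
    \<Rightarrow> ((nat \<Rightarrow> real) \<Rightarrow> (nat \<Rightarrow> real) \<Rightarrow> 'y::finite) \<Rightarrow> nat" where
  "nstar Th D g = nat \<lfloor>H_theta Th / H_Y Th D g\<rfloor>"

definition sample_law :: "(nat \<Rightarrow> real) measure \<Rightarrow> nat \<Rightarrow> (nat \<Rightarrow> nat \<Rightarrow> real) measure" where
  "sample_law D m = PiM {..<m} (\<lambda>_. D)"

definition obs :: "((nat \<Rightarrow> real) \<Rightarrow> (nat \<Rightarrow> real) \<Rightarrow> 'y) \<Rightarrow> (nat \<Rightarrow> nat \<Rightarrow> real)
    \<Rightarrow> (nat \<Rightarrow> real) \<Rightarrow> nat \<Rightarrow> nat \<Rightarrow> 'y" where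
  "obs g x \<theta> m = (\<lambda>i\<in>{..<m}. g (x i) \<theta>)"

text \<open>H(theta | Y^n, X^n) = E_{X^n}[ H(theta | Y^n, X^n = x) ]; given X^n = x the
  pair (theta, Y^n) has law of (theta, obs x theta n) with theta uniform.\<close>
definition H_theta_given :: "(nat \<Rightarrow> real) set \<Rightarrow> (nat \<Rightarrow> real) measure
    \<Rightarrow> ((nat \<Rightarrow> real) \<Rightarrow> (nat \<Rightarrow> real) \<Rightarrow> 'y) \<Rightarrow> nat \<Rightarrow> real" where
  "H_theta_given Th D g n =
     (\<integral>x. pmf_cond_entropy (map_pmf (\<lambda>\<theta>. (\<theta>, obs g x \<theta> n)) (pmf_of_set Th))
        \<partial>sample_law D n)"

text \<open>H(Y_{n+1} | Y^n, X^{n+1}) (indices from 0: Y_{n+1} is g (x n) theta).\<close>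
definition H_next_given :: "(nat \<Rightarrow> real) set \<Rightarrow> (nat \<Rightarrow> real) measure
    \<Rightarrow> ((nat \<Rightarrow> real) \<Rightarrow> (nat \<Rightarrow> real) \<Rightarrow> 'y) \<Rightarrow> nat \<Rightarrow> real" where
  "H_next_given Th D g n =
     (\<integral>x. pmf_cond_entropy (map_pmf (\<lambda>\<theta>. (g (x n) \<theta>, obs g x \<theta> n)) (pmf_of_set Th))
        \<partial>sample_law D (Suc n))"

text \<open>D(P_m || Q_m) = integral of log(dP_m/dQ_m) dP_m, where
  dP_m/dQ_m (y,x) = P(Y^m = y | X^m = x) / prod_i P(Y = y_i).\<close>
definition KL_PQ :: "(nat \<Rightarrow> real) set \<Rightarrow> (nat \<Rightarrow> real) measure
    \<Rightarrow> ((nat \<Rightarrow> real) \<Rightarrow> (nat \<Rightarrow> real) \<Rightarrow> 'y) \<Rightarrow> nat \<Rightarrow> real" where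
  "KL_PQ Th D g m =
     (\<integral>x. (let p = map_pmf (\<lambda>\<theta>. obs g x \<theta> m) (pmf_of_set Th) in
            \<Sum>y\<in>set_pmf p. pmf p y * ln (pmf p y / (\<Prod>i<m. law_Y Th D g (y i))))
        \<partial>sample_law D m)"

end

theory Submission
  imports Defs
begin

definition cnt :: "'a set \<Rightarrow> ('a \<Rightarrow> 'b) \<Rightarrow> 'a \<Rightarrow> nat" where
  "cnt S h t = card {t'\<in>S. h t' = h t}"

lemma cnt_pos: "finite S \<Longrightarrow> t \<in> S \<Longrightarrow> cnt S h t \<ge> 1"
proof -
  assume a: "finite S" "t \<in> S"
  have "card {t'\<in>S. h t' = h t} > 0" using a by (auto simp: card_gt_0_iff)
  then show ?thesis unfolding cnt_def by simp
qed

lemma cnt_gt0: "finite S \<Longrightarrow> t \<in> S \<Longrightarrow> cnt S h t > 0"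
  using cnt_pos[of S t h] by linarith

lemma cnt_le: "finite S \<Longrightarrow> cnt S h t \<le> card S"
  unfolding cnt_def by (intro card_mono) auto

lemma cnt_cong: "(\<And>t'. t' \<in> S \<Longrightarrow> h t' = h t \<longleftrightarrow> h' t' = h' t) \<Longrightarrow> cnt S h t = cnt S h' t"
  unfolding cnt_def by (metis (mono_tags, lifting) Collect_cong)

lemma cnt_mono: "finite S \<Longrightarrow> (\<And>t'. t' \<in> S \<Longrightarrow> h t' = h t \<Longrightarrow> h' t' = h' t) \<Longrightarrow> cnt S h t \<le> cnt S h' t"
  unfolding cnt_def by (intro card_mono) auto

lemma fiber_sum:
  assumes "finite S"
  shows "(\<Sum>y\<in>h`S. F y) = (\<Sum>t\<in>S. F (h t) / real (cnt S h t))"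
proof -
  have "(\<Sum>t\<in>S. F (h t) / real (cnt S h t)) =
     (\<Sum>y\<in>h`S. \<Sum>t\<in>{x\<in>S. h x = y}. F (h t) / real (cnt S h t))"
    by (rule sum.image_gen[OF assms])
  also have "\<dots> = (\<Sum>y\<in>h`S. F y)"
  proof (rule sum.cong[OF refl])
    fix y assume y: "y \<in> h ` S"
    then obtain t0 where t0: "t0 \<in> S" "h t0 = y" by auto
    have c: "card {x\<in>S. h x = y} > 0" using t0 assms by (auto simp: card_gt_0_iff)
    have "(\<Sum>t\<in>{x\<in>S. h x = y}. F (h t) / real (cnt S h t)) =
          (\<Sum>t\<in>{x\<in>S. h x = y}. F y / real (card {x\<in>S. h x = y}))"
      by (rule sum.cong) (auto simp: cnt_def)
    also have "\<dots> = F y" using c by simp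
    finally show "(\<Sum>t\<in>{x\<in>S. h x = y}. F (h t) / real (cnt S h t)) = F y" .
  qed
  finally show ?thesis by simp
qed

lemma count_split:
  assumes "finite S"
  shows "(\<Sum>c\<in>u`S. card {t\<in>S. P t \<and> u t = c}) = card {t\<in>S. P t}"
proof -
  have "card {t\<in>S. P t} = (\<Sum>t\<in>S. if P t then 1 else 0)"
    using assms by (simp add: sum.If_cases) (rule arg_cong[where f=card], auto)
  also have "\<dots> = (\<Sum>c\<in>u`S. \<Sum>t\<in>{x\<in>S. u x = c}. if P t then 1 else 0)"
    by (rule sum.image_gen[OF assms])
  also have "\<dots> = (\<Sum>c\<in>u`S. card {t\<in>S. P t \<and> u t = c})"
    apply (rule sum.cong[OF refl])
    using assms by (simp add: sum.If_cases) (rule arg_cong[where f=card], auto)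
  finally show ?thesis by simp
qed


lemma cmi:
  fixes f :: "'a \<Rightarrow> 'b" and u :: "'a \<Rightarrow> 'c" and v :: "'a \<Rightarrow> 'd"
  assumes S: "finite S"
  shows "(\<Sum>t\<in>S. ln (real (cnt S (\<lambda>t. (f t, u t)) t) * real (cnt S (\<lambda>t. (f t, v t)) t) /
            (real (cnt S f t) * real (cnt S (\<lambda>t. (f t, u t, v t)) t)))) \<le> 0"
proof -
  define Nfu where "Nfu b c = real (card {t\<in>S. f t = b \<and> u t = c})" for b c
  define Nfv where "Nfv b d = real (card {t\<in>S. f t = b \<and> v t = d})" for b d
  define Nf where "Nf b = real (card {t\<in>S. f t = b})" for b
  define G where "G y = (case y of (b,c,d) \<Rightarrow> Nfu b c * Nfv b d / Nf b)" for y
  define h where "h t = (f t, u t, v t)" for t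
  define r where "r t = real (cnt S (\<lambda>t. (f t, u t)) t) * real (cnt S (\<lambda>t. (f t, v t)) t) /
            (real (cnt S f t) * real (cnt S (\<lambda>t. (f t, u t, v t)) t))" for t
  have rG: "r t = G (h t) / real (cnt S h t)" for t
    unfolding r_def G_def h_def Nfu_def Nfv_def Nf_def cnt_def by simp
  have rpos: "r t > 0" if "t \<in> S" for t
    unfolding r_def using S that by (simp add: cnt_gt0)
  have "(\<Sum>t\<in>S. ln (r t)) \<le> (\<Sum>t\<in>S. r t - 1)"
    by (intro sum_mono ln_le_minus_one rpos)
  also have "\<dots> = (\<Sum>t\<in>S. r t) - real (card S)" by (simp add: sum_subtractf)
  also have "(\<Sum>t\<in>S. r t) = (\<Sum>y\<in>h`S. G y)"
    unfolding rG by (rule fiber_sum[OF S, symmetric])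
  also have "\<dots> \<le> (\<Sum>y\<in>f`S \<times> (u`S \<times> v`S). G y)"
  proof (rule sum_mono2)
    show "finite (f`S \<times> (u`S \<times> v`S))" using S by auto
    show "h`S \<subseteq> f`S \<times> (u`S \<times> v`S)" unfolding h_def by auto
    show "0 \<le> G y" for y unfolding G_def Nfu_def Nfv_def Nf_def by (auto split: prod.splits)
  qed
  also have "\<dots> = (\<Sum>b\<in>f`S. \<Sum>c\<in>u`S. \<Sum>d\<in>v`S. Nfu b c * Nfv b d / Nf b)"
    unfolding G_def by (simp add: sum.cartesian_product)
  also have "\<dots> = (\<Sum>b\<in>f`S. (\<Sum>c\<in>u`S. Nfu b c) * (\<Sum>d\<in>v`S. Nfv b d) / Nf b)"
    by (simp add: sum_divide_distrib sum_distrib_left sum_distrib_right) (rule sum.cong[OF refl], rule sum.swap)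
  also have "\<dots> = (\<Sum>b\<in>f`S. Nf b)"
  proof (rule sum.cong[OF refl])
    fix b assume b: "b \<in> f`S"
    have p: "Nf b > 0" using b S unfolding Nf_def by (auto simp: card_gt_0_iff)
    have 1: "(\<Sum>c\<in>u`S. Nfu b c) = Nf b"
      unfolding Nfu_def Nf_def using count_split[OF S, where u=u and P="\<lambda>t. f t = b"] by (simp flip: of_nat_sum)
    have 2: "(\<Sum>d\<in>v`S. Nfv b d) = Nf b"
      unfolding Nfv_def Nf_def using count_split[OF S, where u=v and P="\<lambda>t. f t = b"] by (simp flip: of_nat_sum)
    show "(\<Sum>c\<in>u`S. Nfu b c) * (\<Sum>d\<in>v`S. Nfv b d) / Nf b = Nf b"
      unfolding 1 2 using p by simp
  qed
  also have "\<dots> = real (card S)"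
    unfolding Nf_def using count_split[OF S, where u=f and P="\<lambda>t. True"] by (simp flip: of_nat_sum)
  finally show ?thesis unfolding r_def by simp
qed


lemma pmf_map_uniform:
  assumes "finite S" "S \<noteq> {}"
  shows "pmf (map_pmf B (pmf_of_set S)) (B t) = real (cnt S B t) / real (card S)"
  unfolding pmf_map using assms by (simp add: measure_pmf_of_set cnt_def Int_def vimage_def)

lemma ent_uniform:
  assumes "finite S" "S \<noteq> {}"
  shows "pmf_entropy (pmf_of_set S) = ln (real (card S))"
proof -
  have "pmf_entropy (pmf_of_set S) = - (\<Sum>a\<in>S. (1 / real (card S)) * ln (1 / real (card S)))"
    unfolding pmf_entropy_def using assms by simp
  also have "\<dots> = ln (real (card S))" using assms by (simp add: ln_div)
  finally show ?thesis .
qed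

lemma cond_ent_uniform:
  assumes S: "finite S" "S \<noteq> {}"
  shows "pmf_cond_entropy (map_pmf (\<lambda>t. (A t, B t)) (pmf_of_set S)) =
         (\<Sum>t\<in>S. ln (real (cnt S B t) / real (cnt S (\<lambda>t. (A t, B t)) t))) / real (card S)"
proof -
  define h where "h t = (A t, B t)" for t
  define p where "p = map_pmf h (pmf_of_set S)"
  have sp: "set_pmf p = h ` S" unfolding p_def using S by simp
  have ms: "map_pmf snd p = map_pmf B (pmf_of_set S)" unfolding p_def h_def by (simp add: pmf.map_comp o_def)
  have "pmf_cond_entropy p = - (\<Sum>y\<in>h`S. pmf p y * ln (pmf p y / pmf (map_pmf snd p) (snd y)))"
    unfolding pmf_cond_entropy_def sp ..
  also have "\<dots> = - (\<Sum>t\<in>S. pmf p (h t) * ln (pmf p (h t) / pmf (map_pmf snd p) (snd (h t))) / real (cnt S h t))"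
    by (subst fiber_sum[OF S(1)]) simp
  also have "\<dots> = - (\<Sum>t\<in>S. - ln (real (cnt S B t) / real (cnt S h t)) / real (card S))"
  proof -
    have "pmf p (h t) * ln (pmf p (h t) / pmf (map_pmf snd p) (snd (h t))) / real (cnt S h t)
        = - ln (real (cnt S B t) / real (cnt S h t)) / real (card S)" if t: "t \<in> S" for t
    proof -
      have 1: "pmf p (h t) = real (cnt S h t) / real (card S)" unfolding p_def by (rule pmf_map_uniform[OF S])
      have 2: "pmf (map_pmf snd p) (snd (h t)) = real (cnt S B t) / real (card S)"
        unfolding ms h_def by (simp add: pmf_map_uniform[OF S])
      have c1: "real (cnt S h t) > 0" "real (cnt S B t) > 0" "real (card S) > 0"
        using cnt_gt0[OF S(1) t, of h] cnt_gt0[OF S(1) t, of B] S by (auto simp: card_gt_0_iff)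
      show ?thesis unfolding 1 2 using c1 by (simp add: ln_div)
    qed
    then show ?thesis by (intro arg_cong[where f=uminus] sum.cong) auto
  qed
  also have "\<dots> = (\<Sum>t\<in>S. ln (real (cnt S B t) / real (cnt S h t))) / real (card S)"
    by (simp add: sum_divide_distrib sum_negf)
  finally show ?thesis unfolding p_def h_def .
qed

lemma kl_uniform:
  assumes S: "finite S" "S \<noteq> {}"
  shows "(let p = map_pmf B (pmf_of_set S) in \<Sum>y\<in>set_pmf p. pmf p y * ln (pmf p y / Q y)) =
         (\<Sum>t\<in>S. ln (real (cnt S B t) / real (card S) / Q (B t))) / real (card S)"
proof -
  define p where "p = map_pmf B (pmf_of_set S)"
  have sp: "set_pmf p = B ` S" unfolding p_def using S by simp
  have "(\<Sum>y\<in>set_pmf p. pmf p y * ln (pmf p y / Q y)) = 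
        (\<Sum>t\<in>S. pmf p (B t) * ln (pmf p (B t) / Q (B t)) / real (cnt S B t))"
    unfolding sp by (rule fiber_sum[OF S(1)])
  also have "\<dots> = (\<Sum>t\<in>S. ln (real (cnt S B t) / real (card S) / Q (B t)) / real (card S))"
  proof (rule sum.cong[OF refl])
    fix t assume t: "t \<in> S"
    have 1: "pmf p (B t) = real (cnt S B t) / real (card S)" unfolding p_def by (rule pmf_map_uniform[OF S])
    have c1: "real (cnt S B t) > 0" using cnt_gt0[OF S(1) t] by auto
    show "pmf p (B t) * ln (pmf p (B t) / Q (B t)) / real (cnt S B t) = ln (real (cnt S B t) / real (card S) / Q (B t)) / real (card S)"
      unfolding 1 using c1 by simp
  qed
  also have "\<dots> = (\<Sum>t\<in>S. ln (real (cnt S B t) / real (card S) / Q (B t))) / real (card S)"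
    by (simp add: sum_divide_distrib)
  finally show ?thesis unfolding p_def Let_def .
qed


lemma pred_eq_fun:
  fixes f g :: "'a \<Rightarrow> 'y::countable"
  assumes "f \<in> measurable M (count_space UNIV)" "g \<in> measurable M (count_space UNIV)"
  shows "Measurable.pred M (\<lambda>x. f x = g x)"
proof -
  have "{x\<in>space M. \<exists>c. f x = c \<and> g x = c} \<in> sets M"
  proof (rule sets.sets_Collect_countable_Ex)
    fix c :: 'y
    have "{x\<in>space M. f x = c \<and> g x = c} = (f -` {c} \<inter> space M) \<inter> (g -` {c} \<inter> space M)" by auto
    also have "\<dots> \<in> sets M" using assms by (intro sets.Int measurable_sets) auto
    finally show "{x\<in>space M. f x = c \<and> g x = c} \<in> sets M" .
  qed
  then show ?thesis by (simp add: Measurable.pred_def eq_commute)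
qed

lemma meas_card_pred:
  assumes "finite S" "\<And>t. t \<in> S \<Longrightarrow> Measurable.pred M (\<lambda>x. P x t)"
  shows "(\<lambda>x. real (card {t\<in>S. P x t})) \<in> borel_measurable M"
proof -
  have eq: "real (card {t\<in>S. P x t}) = (\<Sum>t\<in>S. if P x t then 1 else 0)" for x
    using assms(1) by (simp add: sum.If_cases Int_def conj_commute)
  show ?thesis unfolding eq
    using assms(1) assms(2)[unfolded Measurable.pred_def] by (intro borel_measurable_sum measurable_If) auto
qed

lemma obs_eq: "obs g x t' n = obs g x t n \<longleftrightarrow> (\<forall>i<n. g (x i) t' = g (x i) t)"
  unfolding obs_def by (auto simp: fun_eq_iff restrict_def)

lemma comp_meas:
  assumes D: "prob_space D" and gm: "(\<lambda>z. g z t) \<in> measurable D (count_space UNIV)" and i: "i < m"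
  shows "(\<lambda>x. g (x i) t) \<in> measurable (sample_law D m) (count_space UNIV)"
  unfolding sample_law_def
  using measurable_compose[OF measurable_component_singleton[of i "{..<m}" "\<lambda>_. D"] gm] i by simp


type_synonym 'y gfun = "(nat \<Rightarrow> real) \<Rightarrow> (nat \<Rightarrow> real) \<Rightarrow> 'y"

definition HGf :: "(nat \<Rightarrow> real) set \<Rightarrow> 'y gfun \<Rightarrow> (nat \<Rightarrow> nat \<Rightarrow> real) \<Rightarrow> nat \<Rightarrow> real" where
  "HGf S g x n = (\<Sum>t\<in>S. ln (real (cnt S (\<lambda>t. obs g x t n) t))) / real (card S)"

definition HNf :: "(nat \<Rightarrow> real) set \<Rightarrow> 'y gfun \<Rightarrow> (nat \<Rightarrow> nat \<Rightarrow> real) \<Rightarrow> nat \<Rightarrow> real" where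
  "HNf S g x n = (\<Sum>t\<in>S. ln (real (cnt S (\<lambda>t. obs g x t n) t) /
                     real (cnt S (\<lambda>t. (g (x n) t, obs g x t n)) t))) / real (card S)"

lemma HG_eq:
  assumes S: "finite S" "S \<noteq> {}"
  shows "pmf_cond_entropy (map_pmf (\<lambda>\<theta>. (\<theta>, obs g x \<theta> n)) (pmf_of_set S)) = HGf S g x n"
proof -
  have "cnt S (\<lambda>t. (t, obs g x t n)) t = 1" if "t \<in> S" for t
  proof -
    have "{t'\<in>S. (t', obs g x t' n) = (t, obs g x t n)} = {t}" using that by auto
    then show ?thesis unfolding cnt_def by simp
  qed
  then show ?thesis
    unfolding cond_ent_uniform[OF S] HGf_def by (intro arg_cong[where f="\<lambda>a. a / _"] sum.cong) auto
qed

lemma HN_eq: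
  assumes S: "finite S" "S \<noteq> {}"
  shows "pmf_cond_entropy (map_pmf (\<lambda>\<theta>. (g (x n) \<theta>, obs g x \<theta> n)) (pmf_of_set S)) = HNf S g x n"
  unfolding cond_ent_uniform[OF S] HNf_def ..

lemma cnt_obs: "cnt S (\<lambda>t. obs g x t n) t0 = card {t\<in>S. \<forall>i\<in>{..<n}. g (x i) t = g (x i) t0}"
  unfolding cnt_def by (rule arg_cong[where f=card]) (auto simp: obs_eq)

lemma cnt_obs2: "cnt S (\<lambda>t. (g (x n) t, obs g x t n)) t0 =
    card {t\<in>S. g (x n) t = g (x n) t0 \<and> (\<forall>i\<in>{..<n}. g (x i) t = g (x i) t0)}"
  unfolding cnt_def by (rule arg_cong[where f=card]) (auto simp: obs_eq)

locale setting =
  fixes S :: "(nat \<Rightarrow> real) set" and D :: "(nat \<Rightarrow> real) measure" and g :: "'y::finite gfun"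
  assumes finS: "finite S" and neS: "S \<noteq> {}" and probD: "prob_space D"
    and gm: "\<And>t. t \<in> S \<Longrightarrow> (\<lambda>z. g z t) \<in> measurable D (count_space UNIV)"
begin

abbreviation "P m \<equiv> sample_law D m"

lemma probP: "prob_space (P m)"
  unfolding sample_law_def using probD by (intro prob_space_PiM) auto

lemma pred_g: "i < m \<Longrightarrow> j < m \<Longrightarrow> t \<in> S \<Longrightarrow> t' \<in> S \<Longrightarrow>
   Measurable.pred (P m) (\<lambda>x. g (x i) t = g (x j) t')"
  by (intro pred_eq_fun comp_meas[OF probD] gm)

lemma meas_cnt_obs: "n \<le> m \<Longrightarrow> t0 \<in> S \<Longrightarrow> (\<lambda>x. real (cnt S (\<lambda>t. obs g x t n) t0)) \<in> borel_measurable (P m)"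
  unfolding cnt_obs
proof (rule meas_card_pred[OF finS])
  fix t assume "t \<in> S" "n \<le> m" "t0 \<in> S"
  then show "Measurable.pred (P m) (\<lambda>x. \<forall>i\<in>{..<n}. g (x i) t = g (x i) t0)"
    by (intro pred_intros_finite(3)) (simp_all add: pred_g)
qed

lemma meas_cnt_obs2: "n < m \<Longrightarrow> t0 \<in> S \<Longrightarrow> (\<lambda>x. real (cnt S (\<lambda>t. (g (x n) t, obs g x t n)) t0)) \<in> borel_measurable (P m)"
  unfolding cnt_obs2
proof (rule meas_card_pred[OF finS])
  fix t assume "t \<in> S" "n < m" "t0 \<in> S"
  then show "Measurable.pred (P m) (\<lambda>x. g (x n) t = g (x n) t0 \<and> (\<forall>i\<in>{..<n}. g (x i) t = g (x i) t0))"
    by (intro pred_intros_logic(3) pred_intros_finite(3)) (simp_all add: pred_g)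
qed

lemma meas_HG: "n \<le> m \<Longrightarrow> (\<lambda>x. HGf S g x n) \<in> borel_measurable (P m)"
  unfolding HGf_def
  by (intro borel_measurable_divide borel_measurable_sum borel_measurable_ln meas_cnt_obs borel_measurable_const) auto

lemma meas_HN: "n < m \<Longrightarrow> (\<lambda>x. HNf S g x n) \<in> borel_measurable (P m)"
  unfolding HNf_def
  by (intro borel_measurable_divide borel_measurable_sum borel_measurable_ln meas_cnt_obs meas_cnt_obs2 borel_measurable_const) auto

lemma HG_bounds: "0 \<le> HGf S g x n" "HGf S g x n \<le> ln (real (card S))"
proof -
  have c: "1 \<le> real (cnt S (\<lambda>t. obs g x t n) t)" "real (cnt S (\<lambda>t. obs g x t n) t) \<le> real (card S)" if "t \<in> S" for t
    using cnt_pos[OF finS that] cnt_le[OF finS] by auto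
  have "0 \<le> (\<Sum>t\<in>S. ln (real (cnt S (\<lambda>t. obs g x t n) t)))"
    using c by (intro sum_nonneg) auto
  then show "0 \<le> HGf S g x n" unfolding HGf_def by simp
  have "(\<Sum>t\<in>S. ln (real (cnt S (\<lambda>t. obs g x t n) t))) \<le> (\<Sum>t\<in>S. ln (real (card S)))"
  proof (rule sum_mono)
    fix t assume t: "t \<in> S"
    have "0 < real (cnt S (\<lambda>t. obs g x t n) t)" using c(1)[OF t] by linarith
    then show "ln (real (cnt S (\<lambda>t. obs g x t n) t)) \<le> ln (real (card S))"
      using c(2)[OF t] by (subst ln_le_cancel_iff) auto
  qed
  then show "HGf S g x n \<le> ln (real (card S))" unfolding HGf_def using finS neS
    by (simp add: divide_le_eq card_gt_0_iff mult.commute)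
qed

lemma HN_bounds: "0 \<le> HNf S g x n" "HNf S g x n \<le> ln (real (card S))"
proof -
  let ?a = "\<lambda>t. real (cnt S (\<lambda>t. obs g x t n) t)" and ?b = "\<lambda>t. real (cnt S (\<lambda>t. (g (x n) t, obs g x t n)) t)"
  have c: "1 \<le> ?a t / ?b t" "?a t / ?b t \<le> real (card S)" if "t \<in> S" for t
  proof -
    have b1: "?b t \<le> ?a t" using cnt_mono[OF finS, of "\<lambda>t. (g (x n) t, obs g x t n)" t "\<lambda>t. obs g x t n"] by auto
    have b2: "1 \<le> ?b t" using cnt_pos[OF finS that, of "\<lambda>t. (g (x n) t, obs g x t n)"] by simp
    have b3: "?a t \<le> real (card S)" using cnt_le[OF finS, of "\<lambda>t. obs g x t n" t] by simp
    note ba = b1 b2 b3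
    have cb: "real (card S) * 1 \<le> real (card S) * ?b t" using ba(2) by (intro mult_left_mono) auto
    have bpos: "?b t > 0" using ba(2) by linarith
    show "1 \<le> ?a t / ?b t" using ba bpos by (simp add: le_divide_eq)
    have "?a t \<le> real (card S) * ?b t" using ba(3) cb by linarith
    then show "?a t / ?b t \<le> real (card S)" using bpos by (simp add: divide_le_eq mult.commute)
  qed
  have "0 \<le> (\<Sum>t\<in>S. ln (?a t / ?b t))"
    using c by (intro sum_nonneg) auto
  then show "0 \<le> HNf S g x n" unfolding HNf_def by simp
  have "(\<Sum>t\<in>S. ln (?a t / ?b t)) \<le> (\<Sum>t\<in>S. ln (real (card S)))"
  proof (rule sum_mono)
    fix t assume t: "t \<in> S"
    have "0 < ?a t / ?b t" using c(1)[OF t] by linarith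
    then show "ln (?a t / ?b t) \<le> ln (real (card S))"
      using c(2)[OF t] by (subst ln_le_cancel_iff) auto
  qed
  then show "HNf S g x n \<le> ln (real (card S))" unfolding HNf_def using finS neS
    by (simp add: divide_le_eq card_gt_0_iff mult.commute)
qed

lemma int_bounded:
  assumes "f \<in> borel_measurable (P m)" "\<And>x. \<bar>f x :: real\<bar> \<le> B"
  shows "integrable (P m) f"
proof -
  interpret prob_space "P m" by (rule probP)
  show ?thesis using assms by (intro integrable_const_bound[where B=B]) auto
qed

lemma int_HG: "n \<le> m \<Longrightarrow> integrable (P m) (\<lambda>x. HGf S g x n)"
  using HG_bounds by (intro int_bounded[where B="ln (real (card S))"] meas_HG) (auto simp: abs_le_iff)

lemma int_HN: "n < m \<Longrightarrow> integrable (P m) (\<lambda>x. HNf S g x n)"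
  using HN_bounds by (intro int_bounded[where B="ln (real (card S))"] meas_HN) (auto simp: abs_le_iff)

end

lemma nat_floor_bounds:
  fixes x :: real assumes "x \<ge> 0"
  shows "real (nat \<lfloor>x\<rfloor>) \<le> x" "real (nat \<lfloor>x\<rfloor>) > x - 1"
  using assms by linarith+

lemma nat_ceil_bounds:
  fixes x :: real assumes "x \<ge> 0"
  shows "real (nat \<lceil>x\<rceil>) \<ge> x" "real (nat \<lceil>x\<rceil>) < x + 1"
  using assms by linarith+

lemma dec_mono:
  assumes "\<And>k. a (Suc k) \<le> (a k :: real)" "m \<le> k"
  shows "a k \<le> a m"
  using assms(2)
proof (induction k)
  case 0 then show ?case by simp
next
  case (Suc k)
  then show ?case using assms(1)[of k] by (cases "m = Suc k") (auto simp: le_Suc_eq)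
qed

lemma sum_split_nat: fixes m K :: nat shows "m \<le> K \<Longrightarrow> (\<Sum>k<K. f k) = (\<Sum>k<m. f k) + (\<Sum>k=m..<K. (f k :: real))"
  using sum.atLeastLessThan_concat[of 0 m K f] by (simp add: atLeast0LessThan)

lemma abstract_seq:
  fixes Hth h KL :: "nat \<Rightarrow> real" and a G :: "nat \<Rightarrow> nat \<Rightarrow> real" and C :: real
  defines "ns \<equiv> \<lambda>N. nat \<lfloor>Hth N / h N\<rfloor>"
  assumes Hlim: "filterlim Hth at_top sequentially"
    and hnn: "\<And>N. 0 \<le> h N" and hC: "\<And>N. h N \<le> C"
    and ev: "eventually (\<lambda>N. (\<forall>k. 0 \<le> a N k \<and> a N k \<le> h N \<and> a N (Suc k) \<le> a N k)
               \<and> (\<forall>n. G N n = Hth N - (\<Sum>k<n. a N k)) \<and> (\<forall>n. 0 \<le> G N n)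
               \<and> KL N = real (ns N) * h N - Hth N + G N (ns N)) sequentially"
    and hyp: "\<forall>(\<epsilon>::real) (n::nat \<Rightarrow> nat). \<epsilon> > 0 \<longrightarrow>
               (\<forall>N. real (n N) \<ge> (1 + \<epsilon>) * real (ns N)) \<longrightarrow>
               ((\<lambda>N. G N (n N) / Hth N) \<longlongrightarrow> 0) sequentially"
  shows "((\<lambda>N. KL N / Hth N) \<longlongrightarrow> 0) sequentially
         \<and> (\<forall>(\<epsilon>::real) (n::nat \<Rightarrow> nat). \<epsilon> > 0 \<longrightarrow>
               (\<forall>N. real (n N) \<le> (1 - \<epsilon>) * real (ns N)) \<longrightarrow>
               ((\<lambda>N. a N (n N) / h N) \<longlongrightarrow> 1) sequentially)"
proof -
  have Hpos: "eventually (\<lambda>N. Hth N > 0) sequentially"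
    using Hlim by (simp add: filterlim_at_top_dense)
  have ev1: "eventually (\<lambda>N. \<forall>n. Hth N - (\<Sum>k<n. a N k) \<le> G N n + 0 \<and> G N n \<le> Hth N - (\<Sum>k<n. a N k)) sequentially"
    using ev by eventually_elim auto
  have r2: "((\<lambda>N. G N (2 * ns N) / Hth N) \<longlongrightarrow> 0) sequentially"
    using hyp[rule_format, of 1 "\<lambda>N. 2 * ns N"] by simp
  then have "eventually (\<lambda>N. G N (2 * ns N) / Hth N < 1/2) sequentially"
    by (rule order_tendstoD) simp
  then have hpos: "eventually (\<lambda>N. h N > 0) sequentially"
    using Hpos ev
  proof eventually_elim
    case (elim N)
    show ?case
    proof (rule ccontr)
      assume "\<not> 0 < h N"
      then have h0: "h N = 0" using hnn[of N] by simp
      then have "ns N = 0" unfolding ns_def by simp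
      moreover have "\<forall>k. a N k = 0"
      proof
        fix k have "0 \<le> a N k \<and> a N k \<le> h N" using elim(3) by blast
        then show "a N k = 0" using h0 by linarith
      qed
      ultimately have "G N (2 * ns N) = Hth N" using elim(3) by simp
      then show False using elim by simp
    qed
  qed
  then have Cpos: "C > 0" using hC
    by (metis (no_types, lifting) eventually_sequentially le_refl order_less_le_trans)
  have nsinf: "eventually (\<lambda>N. real (ns N) > B) sequentially" for B
  proof -
    have "eventually (\<lambda>N. Hth N > (B + 1) * C) sequentially"
      using Hlim by (simp add: filterlim_at_top_dense)
    then show ?thesis using hpos Hpos
    proof eventually_elim
      case (elim N)
      have "Hth N / h N \<ge> Hth N / C"
        using elim hC[of N] by (intro divide_left_mono) auto
      moreover have "Hth N / C > B + 1" using elim Cpos by (simp add: field_simps)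
      moreover have "real (ns N) > Hth N / h N - 1"
        unfolding ns_def using elim by (intro nat_floor_bounds) auto
      ultimately show ?case by linarith
    qed
  qed
  have nsh: "eventually (\<lambda>N. real (ns N) * h N \<le> Hth N) sequentially"
    using hpos Hpos
  proof eventually_elim
    case (elim N)
    have "real (ns N) \<le> Hth N / h N" unfolding ns_def using elim by (intro nat_floor_bounds) auto
    then show ?case using elim by (simp add: field_simps)
  qed
  have hH: "((\<lambda>N. h N / Hth N) \<longlongrightarrow> 0) sequentially"
  proof (rule tendsto_sandwich[where f="\<lambda>_. 0" and h="\<lambda>N. C / Hth N"])
    show "eventually (\<lambda>N. 0 \<le> h N / Hth N) sequentially" using Hpos by eventually_elim (simp add: hnn)
    show "eventually (\<lambda>N. h N / Hth N \<le> C / Hth N) sequentially" using Hpos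
      by eventually_elim (simp add: hC divide_right_mono)
    show "((\<lambda>N. C / Hth N) \<longlongrightarrow> 0) sequentially"
      by (rule tendsto_divide_0[OF tendsto_const]) (rule filterlim_at_top_imp_at_infinity[OF Hlim])
  qed simp
  have P1: "((\<lambda>N. KL N / Hth N) \<longlongrightarrow> 0) sequentially"
  proof (rule order_tendstoI)
    fix e :: real assume "e < 0"
    then have "eventually (\<lambda>N. e < - (h N / Hth N)) sequentially"
      using hH by (intro order_tendstoD) (auto intro: tendsto_minus_cancel_left[THEN iffD1] simp: tendsto_minus_cancel_left)
    then show "eventually (\<lambda>N. e < KL N / Hth N) sequentially"
      using ev Hpos hpos
    proof eventually_elim
      case (elim N)
      have "real (ns N) > Hth N / h N - 1" unfolding ns_def using elim by (intro nat_floor_bounds) auto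
      then have "real (ns N) * h N \<ge> Hth N - h N" using elim by (simp add: field_simps)
      moreover have "0 \<le> G N (ns N)" "KL N = real (ns N) * h N - Hth N + G N (ns N)" using elim(2) by blast+
      ultimately have "KL N \<ge> - h N" by linarith
      then have "- h N / Hth N \<le> KL N / Hth N"
        by (rule divide_right_mono) (use elim(3) in simp)
      then show ?case using elim(1) by simp
    qed
  next
    fix e :: real assume e: "e > 0"
    define ep where "ep = e / 3"
    have ep: "ep > 0" using e by (simp add: ep_def)
    define K where "K N = nat \<lceil>(1 + ep) * real (ns N)\<rceil>" for N
    have Kge: "real (K N) \<ge> (1 + ep) * real (ns N)" for N
      unfolding K_def using ep by (intro nat_ceil_bounds) auto
    have Klt: "real (K N) < (1 + ep) * real (ns N) + 1" for N
      unfolding K_def using ep by (intro nat_ceil_bounds) auto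
    have "((\<lambda>N. G N (K N) / Hth N) \<longlongrightarrow> 0) sequentially"
      using hyp ep Kge by blast
    then have r: "eventually (\<lambda>N. G N (K N) / Hth N < ep) sequentially"
      using ep by (intro order_tendstoD) auto
    have hh: "eventually (\<lambda>N. h N / Hth N < ep) sequentially"
      using hH ep by (intro order_tendstoD) auto
    show "eventually (\<lambda>N. KL N / Hth N < e) sequentially"
      using r hh ev Hpos nsh
    proof eventually_elim
      case (elim N)
      have "ep * real (ns N) \<ge> 0" "(1 + ep) * real (ns N) = real (ns N) + ep * real (ns N)"
        using ep by (auto simp: algebra_simps)
      then have "real (ns N) \<le> real (K N)" using Kge[of N] by linarith
      then have nsK: "ns N \<le> K N" by simp
      have spl: "(\<Sum>k<K N. a N k) = (\<Sum>k<ns N. a N k) + (\<Sum>k=ns N..<K N. a N k)"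
        by (rule sum_split_nat[OF nsK])
      have "(\<Sum>k=ns N..<K N. a N k) \<le> real (card {ns N..<K N}) * h N"
        using elim(3) by (intro sum_bounded_above) auto
      also have "\<dots> = (real (K N) - real (ns N)) * h N" using nsK by simp
      also have "\<dots> \<le> (ep * real (ns N) + 1) * h N"
        using Klt[of N] hnn[of N] by (intro mult_right_mono) (auto simp: algebra_simps)
      also have "\<dots> = ep * (real (ns N) * h N) + h N" by (simp add: algebra_simps)
      also have "\<dots> \<le> ep * Hth N + h N" using elim(5) ep by simp
      finally have tail: "(\<Sum>k=ns N..<K N. a N k) \<le> ep * Hth N + h N" .
      have "KL N \<le> G N (ns N)" using elim(3) elim(5) by simp
      also have "\<dots> \<le> G N (K N) + ep * Hth N + h N" using elim(3) spl tail by simp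
      finally have "KL N / Hth N \<le> G N (K N) / Hth N + ep + h N / Hth N"
        using elim(4) by (simp add: field_simps)
      then show ?case using elim(1,2) unfolding ep_def by linarith
    qed
  qed
  have P2: "((\<lambda>N. a N (n N) / h N) \<longlongrightarrow> 1) sequentially"
    if eps: "\<epsilon> > 0" and nle: "\<forall>N. real (n N) \<le> (1 - \<epsilon>) * real (ns N)" for \<epsilon> :: real and n :: "nat \<Rightarrow> nat"
  proof (rule order_tendstoI)
    fix e :: real assume e1: "e > 1"
    show "eventually (\<lambda>N. a N (n N) / h N < e) sequentially"
      using ev hpos
    proof eventually_elim
      case (elim N)
      then have "a N (n N) \<le> h N" by blast
      then have "a N (n N) / h N \<le> 1" using elim by simp
      then show ?case using e1 by simp
    qed
  next
    fix e :: real assume e: "e < 1"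
    define d where "d = min (1 - e) 1"
    define e0 where "e0 = min \<epsilon> 1"
    have d: "d > 0" "d \<le> 1" using e by (auto simp: d_def)
    have e0: "e0 > 0" "e0 \<le> 1" "e0 \<le> \<epsilon>" using eps by (auto simp: e0_def)
    define ep where "ep = d * e0 / 2"
    have ep: "ep > 0" using d e0 by (simp add: ep_def)
    define K where "K N = nat \<lceil>(1 + ep) * real (ns N)\<rceil>" for N
    have Kge: "real (K N) \<ge> (1 + ep) * real (ns N)" for N
      unfolding K_def using ep by (intro nat_ceil_bounds) auto
    have Klt: "real (K N) < (1 + ep) * real (ns N) + 1" for N
      unfolding K_def using ep by (intro nat_ceil_bounds) auto
    have "((\<lambda>N. G N (K N) / Hth N) \<longlongrightarrow> 0) sequentially"
      using hyp ep Kge by blast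
    then have r: "eventually (\<lambda>N. G N (K N) / Hth N < d * e0 / 4) sequentially"
      using d e0 by (intro order_tendstoD) auto
    have big: "eventually (\<lambda>N. real (ns N) > 4 / (d * e0)) sequentially" by (rule nsinf)
    show "eventually (\<lambda>N. e < a N (n N) / h N) sequentially"
      using r big ev Hpos hpos nsh
    proof eventually_elim
      case (elim N)
      have hN: "h N > 0" using elim by simp
      have mono: "\<And>k. a N (Suc k) \<le> a N k" using elim(3) by blast
      show ?case
      proof (rule ccontr)
        assume "\<not> e < a N (n N) / h N"
        then have "a N (n N) \<le> e * h N" using hN by (simp add: field_simps)
        moreover have "e * h N \<le> (1 - d) * h N" using hN unfolding d_def
          by (intro mult_right_mono) auto
        ultimately have am: "a N (n N) \<le> (1 - d) * h N" by linarith
        have q1: "\<epsilon> * real (ns N) \<ge> 0" "ep * real (ns N) \<ge> 0" "(\<epsilon> - e0) * real (ns N) \<ge> 0"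
          using eps ep e0 by auto
        have q2: "(1 - \<epsilon>) * real (ns N) \<le> real (ns N)" using q1(1) by (simp add: algebra_simps)
        have q3: "real (ns N) \<le> (1 + ep) * real (ns N)" using q1(2) by (simp add: algebra_simps)
        have q4: "(1 + ep) * real (ns N) - (1 - \<epsilon>) * real (ns N) - e0 * real (ns N)
                 = ep * real (ns N) + (\<epsilon> - e0) * real (ns N)" by (simp add: algebra_simps)
        have mns: "real (n N) \<le> real (ns N)" using nle[rule_format, of N] q2 by linarith
        have mK': "real (n N) \<le> real (K N)" using mns Kge[of N] q3 by linarith
        then have mK: "n N \<le> K N" by simp
        have spl: "(\<Sum>k<K N. a N k) = (\<Sum>k<n N. a N k) + (\<Sum>k=n N..<K N. a N k)"
          by (rule sum_split_nat[OF mK])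
        have s1: "(\<Sum>k<n N. a N k) \<le> real (card {..<n N}) * h N"
          using elim(3) by (intro sum_bounded_above) auto
        have s2: "(\<Sum>k=n N..<K N. a N k) \<le> real (card {n N..<K N}) * ((1 - d) * h N)"
        proof (intro sum_bounded_above)
          fix k assume "k \<in> {n N..<K N}"
          then have "a N k \<le> a N (n N)" by (intro dec_mono[where a="a N", OF mono]) auto
          then show "a N k \<le> (1 - d) * h N" using am by simp
        qed
        have "(\<Sum>k<K N. a N k) \<le> real (n N) * h N + (real (K N) - real (n N)) * ((1 - d) * h N)"
          using spl s1 s2 mK by simp
        also have "\<dots> = real (K N) * h N - d * (real (K N) - real (n N)) * h N"
          by (simp add: algebra_simps)
        also have "\<dots> \<le> ((1 + ep) * real (ns N) + 1) * h N - d * (e0 * real (ns N)) * h N"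
        proof -
          have "real (K N) - real (n N) \<ge> e0 * real (ns N)"
            using Kge[of N] nle[rule_format, of N] q1 q4 by linarith
          then have "d * (real (K N) - real (n N)) * h N \<ge> d * (e0 * real (ns N)) * h N"
            using d hN by (intro mult_right_mono mult_left_mono) auto
          moreover have "real (K N) * h N \<le> ((1 + ep) * real (ns N) + 1) * h N"
            using Klt[of N] hN by (intro mult_right_mono) auto
          ultimately show ?thesis by linarith
        qed
        also have "\<dots> = real (ns N) * h N * (1 - d * e0 / 2) + h N"
          unfolding ep_def by (simp add: algebra_simps)
        finally have up: "(\<Sum>k<K N. a N k) \<le> real (ns N) * h N * (1 - d * e0 / 2) + h N" .
        define rr where "rr = G N (K N) / Hth N"
        have rr: "rr < d * e0 / 4" using elim(1) unfolding rr_def .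
        have "(\<Sum>k<K N. a N k) = Hth N - G N (K N)" using elim(3) by simp
        also have "\<dots> = Hth N * (1 - rr)" using elim(4) unfolding rr_def by (simp add: field_simps)
        finally have sK: "(\<Sum>k<K N. a N k) = Hth N * (1 - rr)" .
        have de1: "d * e0 \<le> 1" using d e0 by (intro mult_le_one) auto
        have "1 - rr \<ge> 0" using rr de1 by linarith
        then have "real (ns N) * h N * (1 - rr) \<le> Hth N * (1 - rr)"
          using elim(6) by (intro mult_right_mono) auto
        then have "real (ns N) * h N * (1 - rr) \<le> real (ns N) * h N * (1 - d * e0 / 2) + h N"
          using up sK by linarith
        moreover have "real (ns N) * h N * (1 - rr) - real (ns N) * h N * (1 - d * e0 / 2)
             = real (ns N) * (d * e0 / 2 - rr) * h N" by (simp add: algebra_simps)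
        ultimately have "real (ns N) * (d * e0 / 2 - rr) * h N \<le> 1 * h N" by linarith
        then have "real (ns N) * (d * e0 / 2 - rr) \<le> 1" using hN by (simp only: mult_le_cancel_right_pos)
        moreover have "real (ns N) * (d * e0 / 2 - rr) > real (ns N) * (d * e0 / 4)"
        proof (rule mult_strict_left_mono)
          show "d * e0 / 4 < d * e0 / 2 - rr" using rr by linarith
          have "4 / (d * e0) > 0" using d e0 by simp
          then show "0 < real (ns N)" using elim(2) by linarith
        qed
        moreover have "real (ns N) * (d * e0 / 4) > 1"
          using elim(2) d e0 by (simp add: field_simps)
        ultimately show False by linarith
      qed
    qed
  qed
  show ?thesis using P1 P2 by blast
qed


lemma obs_restr: "(\<And>i. i < n \<Longrightarrow> y i = x i) \<Longrightarrow> obs g y t n = obs g x t n"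
  unfolding obs_def by (rule restrict_ext) simp

lemma HGf_restr:
  assumes "\<And>i. i < n \<Longrightarrow> y i = x i" shows "HGf S g y n = HGf S g x n"
proof -
  have "obs g y t n = obs g x t n" for t by (rule obs_restr) (rule assms)
  then show ?thesis unfolding HGf_def by simp
qed

lemma HNf_restr:
  assumes "\<And>i. i \<le> n \<Longrightarrow> y i = x i" shows "HNf S g y n = HNf S g x n"
proof -
  have "obs g y t n = obs g x t n" for t by (rule obs_restr) (simp add: assms)
  moreover have "y n = x n" by (simp add: assms)
  ultimately show ?thesis unfolding HNf_def by simp
qed

context setting
begin

lemma Hth_eq: "H_theta S = ln (real (card S))"
  unfolding H_theta_def by (rule ent_uniform[OF finS neS])

lemma HTG_eq: "H_theta_given S D g n = (\<integral>x. HGf S g x n \<partial>P n)"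
  unfolding H_theta_given_def by (simp add: HG_eq[OF finS neS])

lemma HNG_eq: "H_next_given S D g n = (\<integral>x. HNf S g x n \<partial>P (Suc n))"
  unfolding H_next_given_def by (simp add: HN_eq[OF finS neS])

lemma meas_T:
  assumes "\<sigma> \<in> {..<m} \<rightarrow> {..<k}"
  shows "(\<lambda>x. \<lambda>i\<in>{..<m}. x (\<sigma> i)) \<in> measurable (P k) (P m)"
  unfolding sample_law_def
  by (rule measurable_restrict) (use assms in \<open>auto intro!: measurable_component_singleton\<close>)

lemma reindex_int:
  fixes F :: "(nat \<Rightarrow> nat \<Rightarrow> real) \<Rightarrow> real"
  assumes inj: "inj_on \<sigma> {..<m}" and s: "\<sigma> \<in> {..<m} \<rightarrow> {..<k}" and F: "F \<in> borel_measurable (P m)"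
  shows "(\<integral>x. F (\<lambda>i\<in>{..<m}. x (\<sigma> i)) \<partial>P k) = (\<integral>y. F y \<partial>P m)"
proof -
  have "distr (P k) (P m) (\<lambda>x. \<lambda>i\<in>{..<m}. x (\<sigma> i)) = P m"
    unfolding sample_law_def using distr_PiM_reindex[of "{..<k}" "\<lambda>_. D" \<sigma> "{..<m}"] probD inj s by simp
  then have "(\<integral>y. F y \<partial>P m) = (\<integral>y. F y \<partial>distr (P k) (P m) (\<lambda>x. \<lambda>i\<in>{..<m}. x (\<sigma> i)))" by simp
  also have "\<dots> = (\<integral>x. F (\<lambda>i\<in>{..<m}. x (\<sigma> i)) \<partial>P k)"
    by (rule integral_distr[OF meas_T[OF s] F])
  finally show ?thesis by simp
qed

lemma HG_step: "HGf S g x (Suc n) = HGf S g x n - HNf S g x n"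
proof -
  have c: "cnt S (\<lambda>t. obs g x t (Suc n)) t = cnt S (\<lambda>t. (g (x n) t, obs g x t n)) t" for t
    by (rule cnt_cong) (auto simp: obs_eq less_Suc_eq)
  have "ln (real (cnt S (\<lambda>t. (g (x n) t, obs g x t n)) t)) =
        ln (real (cnt S (\<lambda>t. obs g x t n) t)) - ln (real (cnt S (\<lambda>t. obs g x t n) t) /
                     real (cnt S (\<lambda>t. (g (x n) t, obs g x t n)) t))" if "t \<in> S" for t
    using cnt_gt0[OF finS that, of "\<lambda>t. obs g x t n"] cnt_gt0[OF finS that, of "\<lambda>t. (g (x n) t, obs g x t n)"]
    by (simp add: ln_div)
  then show ?thesis unfolding HGf_def HNf_def c
    by (simp add: sum_subtractf diff_divide_distrib)
qed

lemma HTG_step: "H_theta_given S D g (Suc n) = H_theta_given S D g n - H_next_given S D g n"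
proof -
  have "H_theta_given S D g (Suc n) = (\<integral>x. HGf S g x n - HNf S g x n \<partial>P (Suc n))"
    unfolding HTG_eq HG_step ..
  also have "\<dots> = (\<integral>x. HGf S g x n \<partial>P (Suc n)) - (\<integral>x. HNf S g x n \<partial>P (Suc n))"
    using int_HG[of n "Suc n"] int_HN[of n "Suc n"] by simp
  also have "(\<integral>x. HGf S g x n \<partial>P (Suc n)) = (\<integral>x. HGf S g (\<lambda>i\<in>{..<n}. x i) n \<partial>P (Suc n))"
    by (rule Bochner_Integration.integral_cong[OF refl], rule HGf_restr[symmetric]) simp
  also have "\<dots> = (\<integral>x. HGf S g x n \<partial>P n)"
    using reindex_int[of "\<lambda>i. i" n "Suc n" "\<lambda>x. HGf S g x n"] meas_HG[of n n] by simp
  finally show ?thesis unfolding HTG_eq HNG_eq by simp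
qed

lemma HTG_0: "H_theta_given S D g 0 = ln (real (card S))"
proof -
  have "HGf S g x 0 = ln (real (card S))" for x
  proof -
    have "cnt S (\<lambda>t. obs g x t 0) t = card S" for t
      unfolding cnt_def obs_eq by simp
    then show ?thesis unfolding HGf_def using finS neS by (simp add: card_gt_0_iff)
  qed
  then show ?thesis unfolding HTG_eq using prob_space.prob_space[OF probP] by simp
qed

lemma HTG_formula: "H_theta_given S D g n = ln (real (card S)) - (\<Sum>k<n. H_next_given S D g k)"
  by (induction n) (simp_all add: HTG_0 HTG_step)

lemma HNG_nonneg: "0 \<le> H_next_given S D g n"
  unfolding HNG_eq by (rule integral_nonneg_AE) (simp add: HN_bounds)

lemma HN_mono_pt:
  "HNf S g x (Suc n) \<le> HNf S g (\<lambda>i\<in>{..<Suc n}. x (if i = n then Suc n else i)) n"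
proof -
  define y where "y = (\<lambda>i\<in>{..<Suc n}. x (if i = n then Suc n else i))"
  define f where "f t = obs g x t n" for t
  define u where "u t = g (x (Suc n)) t" for t
  define v where "v t = g (x n) t" for t
  have e1: "HNf S g y n = (\<Sum>t\<in>S. ln (real (cnt S f t) / real (cnt S (\<lambda>t. (f t, u t)) t))) / real (card S)"
  proof -
    have "obs g y t n = f t" for t unfolding f_def by (rule obs_restr) (simp add: y_def)
    moreover have "g (y n) t = u t" for t by (simp add: y_def u_def)
    moreover have "cnt S (\<lambda>t. (u t, f t)) t = cnt S (\<lambda>t. (f t, u t)) t" for t by (rule cnt_cong) auto
    ultimately show ?thesis unfolding HNf_def by simp
  qed
  have e2: "HNf S g x (Suc n) = (\<Sum>t\<in>S. ln (real (cnt S (\<lambda>t. (f t, v t)) t) / real (cnt S (\<lambda>t. (f t, u t, v t)) t))) / real (card S)"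
  proof -
    have "cnt S (\<lambda>t. obs g x t (Suc n)) t = cnt S (\<lambda>t. (f t, v t)) t" for t
      by (rule cnt_cong) (auto simp: obs_eq less_Suc_eq f_def v_def)
    moreover have "cnt S (\<lambda>t. (g (x (Suc n)) t, obs g x t (Suc n))) t = cnt S (\<lambda>t. (f t, u t, v t)) t" for t
      by (rule cnt_cong) (auto simp: obs_eq less_Suc_eq f_def v_def u_def)
    ultimately show ?thesis unfolding HNf_def by simp
  qed
  have tm: "ln (real (cnt S f t) / real (cnt S (\<lambda>t. (f t, u t)) t)) - ln (real (cnt S (\<lambda>t. (f t, v t)) t) / real (cnt S (\<lambda>t. (f t, u t, v t)) t))
     = - ln (real (cnt S (\<lambda>t. (f t, u t)) t) * real (cnt S (\<lambda>t. (f t, v t)) t) / (real (cnt S f t) * real (cnt S (\<lambda>t. (f t, u t, v t)) t)))"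
    if "t \<in> S" for t
    using cnt_gt0[OF finS that, of f] cnt_gt0[OF finS that, of "\<lambda>t. (f t, u t)"]
      cnt_gt0[OF finS that, of "\<lambda>t. (f t, v t)"] cnt_gt0[OF finS that, of "\<lambda>t. (f t, u t, v t)"]
    by (simp add: ln_div ln_mult)
  let ?A = "\<lambda>t. ln (real (cnt S f t) / real (cnt S (\<lambda>t. (f t, u t)) t))"
  let ?B = "\<lambda>t. ln (real (cnt S (\<lambda>t. (f t, v t)) t) / real (cnt S (\<lambda>t. (f t, u t, v t)) t))"
  let ?C = "\<lambda>t. ln (real (cnt S (\<lambda>t. (f t, u t)) t) * real (cnt S (\<lambda>t. (f t, v t)) t) / (real (cnt S f t) * real (cnt S (\<lambda>t. (f t, u t, v t)) t)))"
  have "(\<Sum>t\<in>S. ?A t) - (\<Sum>t\<in>S. ?B t) = (\<Sum>t\<in>S. ?A t - ?B t)" by (simp add: sum_subtractf)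
  also have "\<dots> = (\<Sum>t\<in>S. - ?C t)" by (rule sum.cong[OF refl]) (rule tm)
  also have "\<dots> = - (\<Sum>t\<in>S. ?C t)" by (simp add: sum_negf)
  also have "\<dots> \<ge> 0" using cmi[OF finS, of f u v] by simp
  finally have "(\<Sum>t\<in>S. ?B t) \<le> (\<Sum>t\<in>S. ?A t)" by simp
  then show ?thesis unfolding y_def[symmetric] e1 e2 using finS neS by (simp add: divide_right_mono)
qed

lemma HNG_mono: "H_next_given S D g (Suc n) \<le> H_next_given S D g n"
proof -
  define \<sigma> where "\<sigma> i = (if i = n then Suc n else i)" for i
  define T where "T x = (\<lambda>i\<in>{..<Suc n}. x (\<sigma> i))" for x :: "nat \<Rightarrow> nat \<Rightarrow> real"
  have s: "\<sigma> \<in> {..<Suc n} \<rightarrow> {..<Suc (Suc n)}" "inj_on \<sigma> {..<Suc n}"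
    unfolding \<sigma>_def by (auto simp: inj_on_def)
  have mT: "T \<in> measurable (P (Suc (Suc n))) (P (Suc n))" unfolding T_def by (rule meas_T[OF s(1)])
  have "H_next_given S D g (Suc n) = (\<integral>x. HNf S g x (Suc n) \<partial>P (Suc (Suc n)))" by (rule HNG_eq)
  also have "\<dots> \<le> (\<integral>x. HNf S g (T x) n \<partial>P (Suc (Suc n)))"
  proof (rule integral_mono)
    show "integrable (P (Suc (Suc n))) (\<lambda>x. HNf S g x (Suc n))" by (rule int_HN) simp
    show "integrable (P (Suc (Suc n))) (\<lambda>x. HNf S g (T x) n)"
      using HN_bounds by (intro int_bounded[where B="ln (real (card S))"] measurable_compose[OF mT meas_HN])
        (auto simp: abs_le_iff)
    show "HNf S g x (Suc n) \<le> HNf S g (T x) n" for x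
      unfolding T_def \<sigma>_def by (rule HN_mono_pt)
  qed
  also have "\<dots> = (\<integral>x. HNf S g x n \<partial>P (Suc n))"
    unfolding T_def by (rule reindex_int[OF s(2) s(1) meas_HN]) simp
  also have "\<dots> = H_next_given S D g n" by (rule HNG_eq[symmetric])
  finally show ?thesis .
qed

end

lemma int_bounded_gen:
  assumes "prob_space M" "f \<in> borel_measurable M" "\<And>x. \<bar>f x :: real\<bar> \<le> B"
  shows "integrable M f"
proof -
  interpret prob_space M by (rule assms)
  show ?thesis using assms by (intro integrable_const_bound[where B=B]) auto
qed

context setting
begin

abbreviation "q \<equiv> law_Y S D g"

lemma setA: "t \<in> S \<Longrightarrow> {z\<in>space D. g z t = y} \<in> sets D"
  using pred_count_space_const1[OF gm, of t y] by (simp add: Measurable.pred_def)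

lemma meas_gF: "t \<in> S \<Longrightarrow> (\<lambda>z. F (g z t) :: real) \<in> borel_measurable D"
  by (rule measurable_compose[OF gm]) auto

lemma int_gF: "t \<in> S \<Longrightarrow> integrable D (\<lambda>z. F (g z t) :: real)"
proof (rule int_bounded_gen[OF probD meas_gF, where B="\<Sum>y\<in>UNIV. \<bar>F y\<bar>"])
  fix z show "\<bar>F (g z t)\<bar> \<le> (\<Sum>y\<in>UNIV. \<bar>F y\<bar>)"
    by (rule member_le_sum) auto
qed

lemma int_fun:
  assumes t: "t \<in> S"
  shows "(\<integral>z. F (g z t) \<partial>D) = (\<Sum>y\<in>UNIV. measure D {z\<in>space D. g z t = y} * F y)"
proof -
  interpret prob_space D by (rule probD)
  have "(\<integral>z. F (g z t) \<partial>D) = (\<integral>z. (\<Sum>y\<in>UNIV. indicator {z\<in>space D. g z t = y} z * F y) \<partial>D)"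
  proof (rule Bochner_Integration.integral_cong[OF refl])
    fix z assume z: "z \<in> space D"
    have "(\<Sum>y\<in>UNIV. indicator {z\<in>space D. g z t = y} z * F y) = (\<Sum>y\<in>UNIV. if g z t = y then F y else 0)"
      using z by (intro sum.cong) (auto simp: indicator_def)
    also have "\<dots> = F (g z t)" by simp
    finally show "F (g z t) = (\<Sum>y\<in>UNIV. indicator {z\<in>space D. g z t = y} z * F y)" by simp
  qed
  also have "\<dots> = (\<Sum>y\<in>UNIV. (\<integral>z. indicator {z\<in>space D. g z t = y} z * F y \<partial>D))"
  proof (rule Bochner_Integration.integral_sum)
    fix y :: 'y
    show "integrable D (\<lambda>z. indicator {z\<in>space D. g z t = y} z * F y)"
      by (intro integrable_mult_left integrable_real_indicator setA[OF t]) (simp add: emeasure_finite less_top[symmetric])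
  qed
  also have "\<dots> = (\<Sum>y\<in>UNIV. measure D {z\<in>space D. g z t = y} * F y)"
    by (intro sum.cong refl) (simp add: Int_absorb2)
  finally show ?thesis .
qed

lemma sum_meas: "t \<in> S \<Longrightarrow> (\<Sum>y\<in>UNIV. measure D {z\<in>space D. g z t = y}) = 1"
  using int_fun[of t "\<lambda>_. 1"] prob_space.prob_space[OF probD] by simp

lemma q_nonneg: "q y \<ge> 0"
  unfolding law_Y_def by (intro divide_nonneg_nonneg sum_nonneg) auto

lemma q_sum: "(\<Sum>y\<in>UNIV. q y) = 1"
proof -
  have "(\<Sum>y\<in>UNIV. q y) = (\<Sum>t\<in>S. \<Sum>y\<in>UNIV. measure D {z\<in>space D. g z t = y}) / real (card S)"
    unfolding law_Y_def by (simp add: sum_divide_distrib[symmetric] sum.swap[of _ UNIV])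
  also have "\<dots> = 1" using sum_meas finS neS by (simp add: card_gt_0_iff)
  finally show ?thesis .
qed

lemma q_le1: "q y \<le> 1"
  using member_le_sum[of y UNIV q] q_nonneg q_sum by simp

lemma HY_eq: "H_Y S D g = - (\<Sum>y\<in>UNIV. q y * ln (q y))"
  unfolding H_Y_def ..

lemma HY_nonneg: "0 \<le> H_Y S D g"
proof -
  have "q y * ln (q y) \<le> 0" for y
    using q_nonneg[of y] q_le1[of y] by (cases "q y = 0") (auto intro!: mult_nonneg_nonpos)
  then show ?thesis unfolding HY_eq by (simp add: sum_nonpos)
qed

lemma HY_le: "H_Y S D g \<le> ln (real (card (UNIV :: 'y set)))"
proof -
  define K where "K = real (card (UNIV :: 'y set))"
  have K: "K > 0" unfolding K_def by simp
  have pt: "- (q y * ln (q y)) \<le> q y * ln K + 1 / K - q y" for y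
  proof (cases "q y = 0")
    case True then show ?thesis using K by simp
  next
    case False
    then have qp: "q y > 0" using q_nonneg[of y] by simp
    have "ln (1 / (q y * K)) \<le> 1 / (q y * K) - 1" using qp K by (intro ln_le_minus_one) simp
    then have "q y * ln (1 / (q y * K)) \<le> q y * (1 / (q y * K) - 1)" using qp by (intro mult_left_mono) auto
    moreover have lnq: "ln (1 / (q y * K)) = - ln (q y) - ln K" using qp K by (simp add: ln_div ln_mult)
    have "q y * ln (1 / (q y * K)) = - (q y * ln (q y)) - q y * ln K" unfolding lnq by (simp add: algebra_simps)
    moreover have "q y * (1 / (q y * K) - 1) = 1 / K - q y" using qp by (simp add: field_simps)
    ultimately show ?thesis by linarith
  qed
  have "H_Y S D g \<le> (\<Sum>y\<in>UNIV. q y * ln K + 1 / K - q y)"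
    unfolding HY_eq sum_negf[symmetric] by (rule sum_mono) (rule pt)
  also have "\<dots> = ln K * (\<Sum>y\<in>UNIV. q y) + real (card (UNIV :: 'y set)) / K - (\<Sum>y\<in>UNIV. q y)"
  proof -
    have "(\<Sum>y\<in>UNIV. q y * ln K) = ln K * (\<Sum>y\<in>UNIV. q y)" by (simp add: sum_distrib_left mult.commute)
    then show ?thesis by (simp add: sum_subtractf sum.distrib)
  qed
  also have "\<dots> = ln K" using K unfolding q_sum K_def by simp
  finally show ?thesis unfolding K_def .
qed

lemma int_lnq: "(\<Sum>t\<in>S. \<integral>z. ln (q (g z t)) \<partial>D) / real (card S) = - H_Y S D g"
proof -
  have "(\<Sum>t\<in>S. \<integral>z. ln (q (g z t)) \<partial>D) = (\<Sum>t\<in>S. \<Sum>y\<in>UNIV. measure D {z\<in>space D. g z t = y} * ln (q y))"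
    by (intro sum.cong refl int_fun)
  also have "\<dots> = (\<Sum>y\<in>UNIV. (\<Sum>t\<in>S. measure D {z\<in>space D. g z t = y}) * ln (q y))"
    by (simp add: sum.swap[of _ S] sum_distrib_right)
  also have "\<dots> = (\<Sum>y\<in>UNIV. real (card S) * (q y * ln (q y)))"
    unfolding law_Y_def using finS neS by (intro sum.cong refl) (simp add: card_gt_0_iff)
  also have "\<dots> = real (card S) * (- H_Y S D g)"
    unfolding HY_eq by (simp add: sum_distrib_left)
  finally show ?thesis using finS neS by (simp add: card_gt_0_iff)
qed

lemma AE_good: "AE z in D. \<forall>t\<in>S. q (g z t) > 0"
proof (rule AE_finite_allI[OF finS])
  fix t assume t: "t \<in> S"
  have "AE z in D. \<forall>y\<in>UNIV. q y = 0 \<longrightarrow> g z t \<noteq> y"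
  proof (rule AE_finite_allI)
    fix y :: 'y
    show "AE z in D. q y = 0 \<longrightarrow> g z t \<noteq> y"
    proof (cases "q y = 0")
      case False then show ?thesis by simp
    next
      case True
      interpret prob_space D by (rule probD)
      have "(\<Sum>t\<in>S. measure D {z\<in>space D. g z t = y}) = 0"
        using True finS neS unfolding law_Y_def by (simp add: card_gt_0_iff)
      then have "measure D {z\<in>space D. g z t = y} = 0"
        using t finS by (subst (asm) sum_nonneg_eq_0_iff) auto
      then have "{z\<in>space D. g z t = y} \<in> null_sets D"
        using setA[OF t] by (intro null_setsI) (simp add: emeasure_eq_measure)
      then show ?thesis by (rule AE_I') auto
    qed
  qed simp
  then show "AE z in D. q (g z t) > 0"
  proof eventually_elim
    case (elim z)
    then show ?case using q_nonneg[of "g z t"] by force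
  qed
qed

definition phi :: "(nat \<Rightarrow> real) \<Rightarrow> real" where
  "phi z = (\<Sum>t\<in>S. ln (real (card S) / real (cnt S (\<lambda>t. g z t) t))) / real (card S)"

lemma phi_bounds: "0 \<le> phi z" "phi z \<le> ln (real (card S))"
proof -
  have c: "1 \<le> real (card S) / real (cnt S (\<lambda>t. g z t) t)" "real (card S) / real (cnt S (\<lambda>t. g z t) t) \<le> real (card S)"
    if "t \<in> S" for t
  proof -
    have b2: "1 \<le> real (cnt S (\<lambda>t. g z t) t)" using cnt_pos[OF finS that, of "\<lambda>t. g z t"] by simp
    have b3: "real (cnt S (\<lambda>t. g z t) t) \<le> real (card S)" using cnt_le[OF finS, of "\<lambda>t. g z t" t] by simp
    have cb: "real (card S) * 1 \<le> real (card S) * real (cnt S (\<lambda>t. g z t) t)" using b2 by (intro mult_left_mono) auto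
    show "1 \<le> real (card S) / real (cnt S (\<lambda>t. g z t) t)" using b2 b3 by (simp add: le_divide_eq)
    show "real (card S) / real (cnt S (\<lambda>t. g z t) t) \<le> real (card S)" using b2 cb by (simp add: divide_le_eq)
  qed
  have "0 \<le> (\<Sum>t\<in>S. ln (real (card S) / real (cnt S (\<lambda>t. g z t) t)))"
    using c by (intro sum_nonneg) auto
  then show "0 \<le> phi z" unfolding phi_def by simp
  have "(\<Sum>t\<in>S. ln (real (card S) / real (cnt S (\<lambda>t. g z t) t))) \<le> (\<Sum>t\<in>S. ln (real (card S)))"
  proof (rule sum_mono)
    fix t assume t: "t \<in> S"
    have "0 < real (card S) / real (cnt S (\<lambda>t. g z t) t)" using c(1)[OF t] by linarith
    then show "ln (real (card S) / real (cnt S (\<lambda>t. g z t) t)) \<le> ln (real (card S))"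
      using c(2)[OF t] by (subst ln_le_cancel_iff) auto
  qed
  then show "phi z \<le> ln (real (card S))" unfolding phi_def using finS neS
    by (simp add: divide_le_eq card_gt_0_iff mult.commute)
qed

lemma meas_phi: "phi \<in> borel_measurable D"
proof -
  have "(\<lambda>z. real (cnt S (\<lambda>t. g z t) t0)) \<in> borel_measurable D" if "t0 \<in> S" for t0
    unfolding cnt_def by (rule meas_card_pred[OF finS]) (intro pred_eq_fun gm that)
  then show ?thesis unfolding phi_def[abs_def]
    by (intro borel_measurable_divide borel_measurable_sum borel_measurable_ln borel_measurable_const) auto
qed

lemma phi_le:
  assumes good: "\<forall>t\<in>S. q (g z t) > 0"
  shows "phi z \<le> - (\<Sum>t\<in>S. ln (q (g z t))) / real (card S)"
proof -
  define u where "u = (\<lambda>t. g z t)"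
  define M where "M = real (card S)"
  have M: "M > 0" using finS neS unfolding M_def by (simp add: card_gt_0_iff)
  have "(\<Sum>t\<in>S. ln (M / real (cnt S u t)) + ln (q (u t))) = (\<Sum>t\<in>S. ln (q (u t) * M / real (cnt S u t)))"
  proof (rule sum.cong[OF refl])
    fix t assume t: "t \<in> S"
    have "q (u t) > 0" using good t unfolding u_def by auto
    moreover have "real (cnt S u t) > 0" using cnt_gt0[OF finS t] by simp
    ultimately show "ln (M / real (cnt S u t)) + ln (q (u t)) = ln (q (u t) * M / real (cnt S u t))"
      using M by (simp add: ln_div ln_mult)
  qed
  also have "\<dots> \<le> (\<Sum>t\<in>S. q (u t) * M / real (cnt S u t) - 1)"
  proof (rule sum_mono)
    fix t assume t: "t \<in> S"
    have "q (u t) > 0" using good t unfolding u_def by auto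
    moreover have "real (cnt S u t) > 0" using cnt_gt0[OF finS t] by simp
    ultimately show "ln (q (u t) * M / real (cnt S u t)) \<le> q (u t) * M / real (cnt S u t) - 1"
      using M by (intro ln_le_minus_one) simp
  qed
  also have "\<dots> = (\<Sum>y\<in>u`S. q y * M) - M"
  proof -
    have fs: "(\<Sum>y\<in>u`S. q y * M) = (\<Sum>t\<in>S. q (u t) * M / real (cnt S u t))" by (rule fiber_sum[OF finS])
    show ?thesis unfolding fs by (simp add: sum_subtractf M_def)
  qed
  also have "\<dots> \<le> 0"
  proof -
    have "(\<Sum>y\<in>u`S. q y) \<le> (\<Sum>y\<in>UNIV. q y)" by (rule sum_mono2) (auto simp: q_nonneg)
    then have "(\<Sum>y\<in>u`S. q y) * M \<le> 1 * M" unfolding q_sum using M by (intro mult_right_mono) auto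
    then show ?thesis by (simp add: sum_distrib_right)
  qed
  finally have "(\<Sum>t\<in>S. ln (M / real (cnt S u t))) \<le> - (\<Sum>t\<in>S. ln (q (u t)))"
    by (simp add: sum.distrib)
  then have "(\<Sum>t\<in>S. ln (M / real (cnt S u t))) / M \<le> (- (\<Sum>t\<in>S. ln (q (u t)))) / M"
    by (rule divide_right_mono) (use M in auto)
  then show ?thesis unfolding phi_def u_def M_def by simp
qed

lemma int_phi: "(\<integral>z. phi z \<partial>D) \<le> H_Y S D g"
proof -
  have "(\<integral>z. phi z \<partial>D) \<le> (\<integral>z. - (\<Sum>t\<in>S. ln (q (g z t))) / real (card S) \<partial>D)"
  proof (rule integral_mono_AE)
    show "integrable D phi"
      using phi_bounds by (intro int_bounded_gen[OF probD meas_phi, where B="ln (real (card S))"]) (auto simp: abs_le_iff)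
    show "integrable D (\<lambda>z. - (\<Sum>t\<in>S. ln (q (g z t))) / real (card S))"
      by (intro integrable_divide_zero integrable_minus Bochner_Integration.integrable_sum int_gF)
    show "AE z in D. phi z \<le> - (\<Sum>t\<in>S. ln (q (g z t))) / real (card S)"
      using AE_good by eventually_elim (rule phi_le)
  qed
  also have "\<dots> = - (\<Sum>t\<in>S. \<integral>z. ln (q (g z t)) \<partial>D) / real (card S)"
  proof -
    have "(\<integral>z. (\<Sum>t\<in>S. ln (q (g z t))) \<partial>D) = (\<Sum>t\<in>S. \<integral>z. ln (q (g z t)) \<partial>D)"
      by (rule Bochner_Integration.integral_sum) (rule int_gF)
    then show ?thesis by simp
  qed
  also have "\<dots> = H_Y S D g" using int_lnq by (simp add: minus_divide_left[symmetric])
  finally show ?thesis .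
qed

lemma HN_le_phi: "HNf S g x n \<le> phi (x n)"
proof -
  define u where "u t = g (x n) t" for t
  define v where "v t = obs g x t n" for t
  define f where "f t = ()" for t :: "nat \<Rightarrow> real"
  have c1: "cnt S (\<lambda>t. (f t, u t)) t = cnt S u t" for t by (rule cnt_cong) (simp add: f_def)
  have c2: "cnt S (\<lambda>t. (f t, v t)) t = cnt S v t" for t by (rule cnt_cong) (simp add: f_def)
  have c3: "cnt S f t = card S" for t unfolding cnt_def f_def by simp
  have c4: "cnt S (\<lambda>t. (f t, u t, v t)) t = cnt S (\<lambda>t. (u t, v t)) t" for t by (rule cnt_cong) (simp add: f_def)
  have C: "(\<Sum>t\<in>S. ln (real (cnt S u t) * real (cnt S v t) / (real (card S) * real (cnt S (\<lambda>t. (u t, v t)) t)))) \<le> 0"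
    using cmi[OF finS, of f u v] unfolding c1 c2 c3 c4 .
  have tm: "ln (real (card S) / real (cnt S u t)) - ln (real (cnt S v t) / real (cnt S (\<lambda>t. (u t, v t)) t))
      = - ln (real (cnt S u t) * real (cnt S v t) / (real (card S) * real (cnt S (\<lambda>t. (u t, v t)) t)))"
    if t: "t \<in> S" for t
  proof -
    have "real (card S) > 0" using finS neS by (simp add: card_gt_0_iff)
    then show ?thesis
      using cnt_gt0[OF finS t, of u] cnt_gt0[OF finS t, of v] cnt_gt0[OF finS t, of "\<lambda>t. (u t, v t)"]
      by (simp add: ln_div ln_mult)
  qed
  let ?A = "\<lambda>t. ln (real (card S) / real (cnt S u t))"
  let ?B = "\<lambda>t. ln (real (cnt S v t) / real (cnt S (\<lambda>t. (u t, v t)) t))"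
  let ?C = "\<lambda>t. ln (real (cnt S u t) * real (cnt S v t) / (real (card S) * real (cnt S (\<lambda>t. (u t, v t)) t)))"
  have "(\<Sum>t\<in>S. ?A t) - (\<Sum>t\<in>S. ?B t) = (\<Sum>t\<in>S. ?A t - ?B t)" by (simp add: sum_subtractf)
  also have "\<dots> = (\<Sum>t\<in>S. - ?C t)" by (rule sum.cong[OF refl]) (rule tm)
  also have "\<dots> = - (\<Sum>t\<in>S. ?C t)" by (simp add: sum_negf)
  finally have "(\<Sum>t\<in>S. ?B t) \<le> (\<Sum>t\<in>S. ?A t)" using C by simp
  moreover have "HNf S g x n = (\<Sum>t\<in>S. ?B t) / real (card S)" unfolding HNf_def u_def v_def ..
  moreover have "phi (x n) = (\<Sum>t\<in>S. ?A t) / real (card S)" unfolding phi_def u_def ..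
  ultimately show ?thesis using finS neS by (simp add: divide_right_mono)
qed

lemma int_component:
  fixes F :: "(nat \<Rightarrow> real) \<Rightarrow> real"
  assumes i: "i < m" and F: "F \<in> borel_measurable D"
  shows "(\<integral>x. F (x i) \<partial>P m) = (\<integral>z. F z \<partial>D)"
proof -
  have "distr (P m) D (\<lambda>x. x i) = D"
    unfolding sample_law_def using distr_PiM_component[of "{..<m}" "\<lambda>_. D" i] probD i by simp
  then have "(\<integral>z. F z \<partial>D) = (\<integral>z. F z \<partial>distr (P m) D (\<lambda>x. x i))" by simp
  also have "\<dots> = (\<integral>x. F (x i) \<partial>P m)"
    by (rule integral_distr[OF _ F]) (use i in \<open>auto simp: sample_law_def intro!: measurable_component_singleton\<close>)
  finally show ?thesis by simp
qed

lemma HNG_le: "H_next_given S D g n \<le> H_Y S D g"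
proof -
  have mc: "(\<lambda>x. x n) \<in> measurable (P (Suc n)) D"
    unfolding sample_law_def by (rule measurable_component_singleton) simp
  have "H_next_given S D g n = (\<integral>x. HNf S g x n \<partial>P (Suc n))" by (rule HNG_eq)
  also have "\<dots> \<le> (\<integral>x. phi (x n) \<partial>P (Suc n))"
  proof (rule integral_mono)
    show "integrable (P (Suc n)) (\<lambda>x. HNf S g x n)" by (rule int_HN) simp
    show "integrable (P (Suc n)) (\<lambda>x. phi (x n))"
      using phi_bounds by (intro int_bounded[where B="ln (real (card S))"] measurable_compose[OF mc meas_phi])
        (auto simp: abs_le_iff)
    show "HNf S g x n \<le> phi (x n)" for x by (rule HN_le_phi)
  qed
  also have "\<dots> = (\<integral>z. phi z \<partial>D)" by (rule int_component[OF _ meas_phi]) simp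
  also have "\<dots> \<le> H_Y S D g" by (rule int_phi)
  finally show ?thesis .
qed

end

context setting
begin

lemma meas_qg: "i < m \<Longrightarrow> t \<in> S \<Longrightarrow> (\<lambda>x. F (g (x i) t) :: real) \<in> borel_measurable (P m)"
  by (rule measurable_compose[OF comp_meas[OF probD gm]]) auto

lemma int_qg: "i < m \<Longrightarrow> t \<in> S \<Longrightarrow> integrable (P m) (\<lambda>x. F (g (x i) t) :: real)"
proof (rule int_bounded[OF meas_qg, where B="\<Sum>y\<in>UNIV. \<bar>F y\<bar>"])
  fix x show "\<bar>F (g (x i) t)\<bar> \<le> (\<Sum>y\<in>UNIV. \<bar>F y\<bar>)" by (rule member_le_sum) auto
qed

definition KLf2 :: "(nat \<Rightarrow> nat \<Rightarrow> real) \<Rightarrow> nat \<Rightarrow> real" where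
  "KLf2 x m = (\<Sum>t\<in>S. ln (real (cnt S (\<lambda>t. obs g x t m) t) / real (card S) / (\<Prod>i<m. q (g (x i) t)))) / real (card S)"

definition KLf3 :: "(nat \<Rightarrow> nat \<Rightarrow> real) \<Rightarrow> nat \<Rightarrow> real" where
  "KLf3 x m = HGf S g x m - ln (real (card S)) - (\<Sum>t\<in>S. \<Sum>i<m. ln (q (g (x i) t))) / real (card S)"

lemma KL_pt2: "(let p = map_pmf (\<lambda>\<theta>. obs g x \<theta> m) (pmf_of_set S) in
            \<Sum>y\<in>set_pmf p. pmf p y * ln (pmf p y / (\<Prod>i<m. q (y i)))) = KLf2 x m"
proof -
  have "(\<Prod>i<m. q (obs g x t m i)) = (\<Prod>i<m. q (g (x i) t))" for t
    by (rule prod.cong) (auto simp: obs_def)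
  then show ?thesis
    unfolding kl_uniform[OF finS neS, of "\<lambda>\<theta>. obs g x \<theta> m" "\<lambda>y. \<Prod>i<m. q (y i)"] KLf2_def by simp
qed

lemma KL_pt3:
  assumes good: "\<forall>i\<in>{..<m}. \<forall>t\<in>S. q (g (x i) t) > 0"
  shows "KLf2 x m = KLf3 x m"
proof -
  have M: "real (card S) > 0" using finS neS by (simp add: card_gt_0_iff)
  have "ln (real (cnt S (\<lambda>t. obs g x t m) t) / real (card S) / (\<Prod>i<m. q (g (x i) t)))
      = ln (real (cnt S (\<lambda>t. obs g x t m) t)) - ln (real (card S)) - (\<Sum>i<m. ln (q (g (x i) t)))"
    if t: "t \<in> S" for t
  proof -
    have c: "real (cnt S (\<lambda>t. obs g x t m) t) > 0" using cnt_gt0[OF finS t] by simp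
    have qp: "\<And>i. i < m \<Longrightarrow> q (g (x i) t) > 0" using good t by auto
    have p: "(\<Prod>i<m. q (g (x i) t)) > 0" using qp by (intro prod_pos) auto
    have "ln (\<Prod>i<m. q (g (x i) t)) = (\<Sum>i<m. ln (q (g (x i) t)))"
      by (rule ln_prod) (use qp in force)+
    moreover have "ln (real (cnt S (\<lambda>t. obs g x t m) t) / real (card S) / (\<Prod>i<m. q (g (x i) t)))
        = ln (real (cnt S (\<lambda>t. obs g x t m) t) / real (card S)) - ln (\<Prod>i<m. q (g (x i) t))"
      using c p M by (intro ln_divide_pos) auto
    moreover have "ln (real (cnt S (\<lambda>t. obs g x t m) t) / real (card S))
        = ln (real (cnt S (\<lambda>t. obs g x t m) t)) - ln (real (card S))"
      using c M by (intro ln_divide_pos) auto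
    ultimately show ?thesis by linarith
  qed
  then have "(\<Sum>t\<in>S. ln (real (cnt S (\<lambda>t. obs g x t m) t) / real (card S) / (\<Prod>i<m. q (g (x i) t))))
     = (\<Sum>t\<in>S. ln (real (cnt S (\<lambda>t. obs g x t m) t))) - real (card S) * ln (real (card S)) - (\<Sum>t\<in>S. \<Sum>i<m. ln (q (g (x i) t)))"
    by (simp add: sum_subtractf)
  then show ?thesis unfolding KLf2_def KLf3_def HGf_def using M
    by (simp add: diff_divide_distrib)
qed

lemma meas_KLf2: "(\<lambda>x. KLf2 x m) \<in> borel_measurable (P m)"
  unfolding KLf2_def
  by (intro borel_measurable_divide borel_measurable_sum borel_measurable_ln borel_measurable_prod
      meas_cnt_obs meas_qg borel_measurable_const) auto

lemma meas_KLf3: "(\<lambda>x. KLf3 x m) \<in> borel_measurable (P m)"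
  unfolding KLf3_def
  by (intro borel_measurable_diff borel_measurable_divide borel_measurable_sum borel_measurable_ln
      meas_HG meas_qg borel_measurable_const) auto

lemma AE_good_P: "AE x in P m. \<forall>i\<in>{..<m}. \<forall>t\<in>S. q (g (x i) t) > 0"
proof (rule AE_finite_allI)
  fix i assume i: "i \<in> {..<m}"
  show "AE x in P m. \<forall>t\<in>S. q (g (x i) t) > 0"
    unfolding sample_law_def
    by (rule AE_PiM_component[where P="\<lambda>z. \<forall>t\<in>S. q (g z t) > 0"]) (use probD i AE_good in auto)
qed simp

lemma KL_eq: "KL_PQ S D g m = H_theta_given S D g m - ln (real (card S)) + real m * H_Y S D g"
proof -
  have "KL_PQ S D g m = (\<integral>x. KLf2 x m \<partial>P m)"
    unfolding KL_PQ_def KL_pt2 ..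
  also have "\<dots> = (\<integral>x. KLf3 x m \<partial>P m)"
  proof (rule integral_cong_AE[OF meas_KLf2 meas_KLf3])
    show "AE x in P m. KLf2 x m = KLf3 x m" using AE_good_P by eventually_elim (rule KL_pt3)
  qed
  also have "\<dots> = (\<integral>x. HGf S g x m \<partial>P m) - ln (real (card S)) - (\<Sum>t\<in>S. \<Sum>i<m. \<integral>x. ln (q (g (x i) t)) \<partial>P m) / real (card S)"
  proof -
    have i1: "integrable (P m) (\<lambda>x. HGf S g x m)" by (rule int_HG) simp
    have i2: "integrable (P m) (\<lambda>x. (\<Sum>t\<in>S. \<Sum>i<m. ln (q (g (x i) t))) / real (card S))"
      by (intro integrable_divide_zero Bochner_Integration.integrable_sum int_qg) auto
    interpret Pm: prob_space "P m" by (rule probP)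
    have i3: "integrable (P m) (\<lambda>x. HGf S g x m - ln (real (card S)))"
      by (intro Bochner_Integration.integrable_diff i1 Pm.integrable_const)
    have "(\<integral>x. KLf3 x m \<partial>P m) = (\<integral>x. (HGf S g x m - ln (real (card S))) - (\<Sum>t\<in>S. \<Sum>i<m. ln (q (g (x i) t))) / real (card S) \<partial>P m)"
      unfolding KLf3_def ..
    also have "\<dots> = (\<integral>x. HGf S g x m - ln (real (card S)) \<partial>P m) - (\<integral>x. (\<Sum>t\<in>S. \<Sum>i<m. ln (q (g (x i) t))) / real (card S) \<partial>P m)"
      by (rule Bochner_Integration.integral_diff[OF i3 i2])
    also have "(\<integral>x. HGf S g x m - ln (real (card S)) \<partial>P m) = (\<integral>x. HGf S g x m \<partial>P m) - ln (real (card S))"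
    proof -
      have "(\<integral>x. HGf S g x m - ln (real (card S)) \<partial>P m) = (\<integral>x. HGf S g x m \<partial>P m) - (\<integral>x. ln (real (card S)) \<partial>P m)"
        by (rule Bochner_Integration.integral_diff[OF i1 Pm.integrable_const])
      then show ?thesis using Pm.prob_space by simp
    qed
    also have "(\<integral>x. (\<Sum>t\<in>S. \<Sum>i<m. ln (q (g (x i) t))) / real (card S) \<partial>P m) = (\<Sum>t\<in>S. \<Sum>i<m. \<integral>x. ln (q (g (x i) t)) \<partial>P m) / real (card S)"
    proof -
      have "(\<integral>x. (\<Sum>t\<in>S. \<Sum>i<m. ln (q (g (x i) t))) \<partial>P m) = (\<Sum>t\<in>S. \<integral>x. (\<Sum>i<m. ln (q (g (x i) t))) \<partial>P m)"
        by (rule Bochner_Integration.integral_sum) (intro Bochner_Integration.integrable_sum int_qg, auto)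
      also have "\<dots> = (\<Sum>t\<in>S. \<Sum>i<m. \<integral>x. ln (q (g (x i) t)) \<partial>P m)"
        by (intro sum.cong refl Bochner_Integration.integral_sum int_qg) auto
      finally show ?thesis by simp
    qed
    finally show ?thesis .
  qed
  also have "(\<Sum>t\<in>S. \<Sum>i<m. \<integral>x. ln (q (g (x i) t)) \<partial>P m) = (\<Sum>t\<in>S. real m * (\<integral>z. ln (q (g z t)) \<partial>D))"
  proof (rule sum.cong[OF refl])
    fix t assume t: "t \<in> S"
    have "(\<Sum>i<m. \<integral>x. ln (q (g (x i) t)) \<partial>P m) = (\<Sum>i<m. \<integral>z. ln (q (g z t)) \<partial>D)"
      by (intro sum.cong refl int_component[where F="\<lambda>z. ln (q (g z t))"] meas_gF t) auto
    then show "(\<Sum>i<m. \<integral>x. ln (q (g (x i) t)) \<partial>P m) = real m * (\<integral>z. ln (q (g z t)) \<partial>D)" by simp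
  qed
  also have "(\<Sum>t\<in>S. real m * (\<integral>z. ln (q (g z t)) \<partial>D)) / real (card S) = real m * ((\<Sum>t\<in>S. \<integral>z. ln (q (g z t)) \<partial>D) / real (card S))"
    by (simp add: sum_distrib_left)
  also have "\<dots> = - (real m * H_Y S D g)" unfolding int_lnq by simp
  finally show ?thesis unfolding HTG_eq by simp
qed

end

lemma HY_empty: "H_Y {} D g = 0"
  by (simp add: H_Y_def law_Y_def)

context setting
begin
lemma HTG_nonneg: "0 \<le> H_theta_given S D g n"
  unfolding HTG_eq by (rule integral_nonneg_AE) (simp add: HG_bounds)
end

theorem lemma3:
  fixes Th :: "nat \<Rightarrow> (nat \<Rightarrow> real) set"
    and L :: "nat \<Rightarrow> nat"
    and D :: "nat \<Rightarrow> (nat \<Rightarrow> real) measure"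
    and g :: "nat \<Rightarrow> (nat \<Rightarrow> real) \<Rightarrow> (nat \<Rightarrow> real) \<Rightarrow> 'y::finite"
  assumes fin: "\<And>N. finite (Th N)"
    and sphere: "\<And>N \<theta>. N \<ge> 1 \<Longrightarrow> \<theta> \<in> Th N \<Longrightarrow>
                    \<theta> \<in> {..<N} \<rightarrow>\<^sub>E (UNIV :: real set) \<and> (\<Sum>i<N. (\<theta> i)\<^sup>2) = 1"
    and nonneg_inner: "\<And>N \<theta> \<theta>'. \<theta> \<in> Th N \<Longrightarrow> \<theta>' \<in> Th N \<Longrightarrow> (\<Sum>i<N. \<theta> i * \<theta>' i) \<ge> 0"
    and M_infty: "filterlim (\<lambda>N. card (Th N)) at_top sequentially"
    and probD: "\<And>N. prob_space (D N)"
    and setsD: "\<And>N. sets (D N) = sets (PiM {..<L N} (\<lambda>_. (lborel :: real measure)))"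
    and g_meas: "\<And>N \<theta>. \<theta> \<in> Th N \<Longrightarrow> (\<lambda>x. g N x \<theta>) \<in> measurable (D N) (count_space UNIV)"
    and hyp: "\<forall>(\<epsilon>::real) (n::nat \<Rightarrow> nat). \<epsilon> > 0 \<longrightarrow>
               (\<forall>N. real (n N) \<ge> (1 + \<epsilon>) * real (nstar (Th N) (D N) (g N))) \<longrightarrow>
               ((\<lambda>N. H_theta_given (Th N) (D N) (g N) (n N) / H_theta (Th N)) \<longlongrightarrow> 0) sequentially"
  shows "((\<lambda>N. KL_PQ (Th N) (D N) (g N) (nstar (Th N) (D N) (g N)) / H_theta (Th N))
            \<longlongrightarrow> 0) sequentially
         \<and> (\<forall>(\<epsilon>::real) (n::nat \<Rightarrow> nat). \<epsilon> > 0 \<longrightarrow>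
               (\<forall>N. real (n N) \<le> (1 - \<epsilon>) * real (nstar (Th N) (D N) (g N))) \<longrightarrow>
               ((\<lambda>N. H_next_given (Th N) (D N) (g N) (n N) / H_Y (Th N) (D N) (g N))
                  \<longlongrightarrow> 1) sequentially)"
proof -
  have set_N: "setting (Th N) (D N) (g N)" if "Th N \<noteq> {}" for N
    by (intro setting.intro fin that probD g_meas)
  have ev_ne: "eventually (\<lambda>N. Th N \<noteq> {}) sequentially"
  proof -
    have "eventually (\<lambda>N. 1 \<le> card (Th N)) sequentially"
      using M_infty by (simp add: filterlim_at_top)
    then show ?thesis by eventually_elim auto
  qed
  have Hlim: "filterlim (\<lambda>N. H_theta (Th N)) at_top sequentially"
  proof -
    have lim: "filterlim (\<lambda>N. ln (real (card (Th N)))) at_top sequentially"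
      by (rule filterlim_compose[OF ln_at_top filterlim_compose[OF filterlim_real_sequentially M_infty]])
    have eq: "eventually (\<lambda>N. ln (real (card (Th N))) = H_theta (Th N)) sequentially"
      using ev_ne by eventually_elim (simp add: setting.Hth_eq[OF set_N])
    show ?thesis using lim filterlim_cong[OF refl refl eq] by simp
  qed
  have hnn: "0 \<le> H_Y (Th N) (D N) (g N)" for N
    by (cases "Th N = {}") (simp_all add: HY_empty setting.HY_nonneg[OF set_N])
  have hC: "H_Y (Th N) (D N) (g N) \<le> ln (real (card (UNIV :: 'y set)))" for N
    by (cases "Th N = {}") (simp_all add: HY_empty setting.HY_le[OF set_N])
  have ev: "eventually (\<lambda>N. (\<forall>k. 0 \<le> H_next_given (Th N) (D N) (g N) k \<and> H_next_given (Th N) (D N) (g N) k \<le> H_Y (Th N) (D N) (g N)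
                 \<and> H_next_given (Th N) (D N) (g N) (Suc k) \<le> H_next_given (Th N) (D N) (g N) k)
               \<and> (\<forall>n. H_theta_given (Th N) (D N) (g N) n = H_theta (Th N) - (\<Sum>k<n. H_next_given (Th N) (D N) (g N) k))
               \<and> (\<forall>n. 0 \<le> H_theta_given (Th N) (D N) (g N) n)
               \<and> KL_PQ (Th N) (D N) (g N) (nat \<lfloor>H_theta (Th N) / H_Y (Th N) (D N) (g N)\<rfloor>)
                   = real (nat \<lfloor>H_theta (Th N) / H_Y (Th N) (D N) (g N)\<rfloor>) * H_Y (Th N) (D N) (g N) - H_theta (Th N)
                     + H_theta_given (Th N) (D N) (g N) (nat \<lfloor>H_theta (Th N) / H_Y (Th N) (D N) (g N)\<rfloor>)) sequentially"
    using ev_ne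
  proof eventually_elim
    case (elim N)
    interpret setting "Th N" "D N" "g N" by (rule set_N[OF elim])
    show ?case using HNG_nonneg HNG_le HNG_mono HTG_formula HTG_nonneg KL_eq Hth_eq by simp
  qed
  show ?thesis
    unfolding nstar_def
    by (rule abstract_seq[OF Hlim hnn hC ev]) (use hyp in \<open>simp add: nstar_def\<close>)
qed


end
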